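(* Let $T$ be a tree with positive edge weights rooted at the homebase $r$, and let $q\ge 0$. In every cost-optimal strategy exploring $T$, if an agent enters a subtree $T_v$ (for a vertex $v$), then it explores (i.e., is the first to visit) at least one leaf of $T_v$.
   Context: Exploration model: given a connected graph with positive edge weights, a homebase vertex, and invoking cost $q\ge 0$, a strategy is a sequence of moves, each either invoking a new agent (appearing at the homebase) or an agent traversing an edge incident to its current vertex. A vertex is explored when first visited; the strategy explores the graph when every vertex has been visited by some agent (agents need not return). With $k$ agents, agent $i$ traversing total distance $d_i$ (weights counted with multiplicity), the cost is $kq+\sum_i d_i$; a strategy is cost-optimal if it explores the graph with minimum cost (off-line setting, graph known). For a rooted tree, $T_v$ denotes the subtree consisting of $v$ and its descendants; a leaf is a non-root vertex with no children. *)

theory Defs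
  imports Complex_Main
begin

definition graph :: "'a set \<Rightarrow> 'a set set \<Rightarrow> bool" where
  "graph V E \<longleftrightarrow> finite V \<and> (\<forall>e\<in>E. \<exists>x y. x \<in> V \<and> y \<in> V \<and> x \<noteq> y \<and> e = {x, y})"

definition walk :: "'a set set \<Rightarrow> 'a list \<Rightarrow> bool" where
  "walk E p \<longleftrightarrow> p \<noteq> [] \<and> (\<forall>i. Suc i < length p \<longrightarrow> {p ! i, p ! Suc i} \<in> E)"

definition connected_graph :: "'a set \<Rightarrow> 'a set set \<Rightarrow> bool" where
  "connected_graph V E \<longleftrightarrow>
     (\<forall>x\<in>V. \<forall>y\<in>V. \<exists>p. walk E p \<and> hd p = x \<and> last p = y)"

definition has_cycle :: "'a set set \<Rightarrow> bool" where
  "has_cycle E \<longleftrightarrow> (\<exists>p. walk E p \<and> distinct p \<and> length p \<ge> 3 \<and> {last p, hd p} \<in> E)"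

definition tree :: "'a set \<Rightarrow> 'a set set \<Rightarrow> bool" where
  "tree V E \<longleftrightarrow> graph V E \<and> V \<noteq> {} \<and> connected_graph V E \<and> \<not> has_cycle E"

text \<open>Subtree T_v of the tree rooted at r: v and its descendants, i.e. the vertices u
such that v lies on (every) path from r to u.\<close>

definition subtree :: "'a set \<Rightarrow> 'a set set \<Rightarrow> 'a \<Rightarrow> 'a \<Rightarrow> 'a set" where
  "subtree V E r v = {u \<in> V. \<forall>p. walk E p \<and> hd p = r \<and> last p = u \<longrightarrow> v \<in> set p}"

definition children :: "'a set \<Rightarrow> 'a set set \<Rightarrow> 'a \<Rightarrow> 'a \<Rightarrow> 'a set" where
  "children V E r v = {c. {v, c} \<in> E \<and> c \<in> subtree V E r v \<and> c \<noteq> v}"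

definition is_leaf :: "'a set \<Rightarrow> 'a set set \<Rightarrow> 'a \<Rightarrow> 'a \<Rightarrow> bool" where
  "is_leaf V E r u \<longleftrightarrow> u \<in> V \<and> u \<noteq> r \<and> children V E r u = {}"

text \<open>A move either invokes a new agent (appearing at the homebase) or lets agent i
(agents numbered 0,1,... in invocation order) traverse an edge to vertex u.\<close>

datatype 'a move = Invoke | Traverse nat 'a

fun step :: "'a \<Rightarrow> 'a list \<Rightarrow> 'a move \<Rightarrow> 'a list" where
  "step r pos Invoke = pos @ [r]"
| "step r pos (Traverse i u) = pos[i := u]"

definition pos_after :: "'a \<Rightarrow> 'a move list \<Rightarrow> nat \<Rightarrow> 'a list" where
  "pos_after r ms k = foldl (step r) [] (take k ms)"

fun valid_move :: "'a set set \<Rightarrow> 'a list \<Rightarrow> 'a move \<Rightarrow> bool" where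
  "valid_move E pos Invoke = True"
| "valid_move E pos (Traverse i u) = (i < length pos \<and> {pos ! i, u} \<in> E)"

definition valid_strategy :: "'a set set \<Rightarrow> 'a \<Rightarrow> 'a move list \<Rightarrow> bool" where
  "valid_strategy E r ms \<longleftrightarrow> (\<forall>k < length ms. valid_move E (pos_after r ms k) (ms ! k))"

definition visited :: "'a \<Rightarrow> 'a move list \<Rightarrow> nat \<Rightarrow> 'a set" where
  "visited r ms k = (\<Union>j\<le>k. set (pos_after r ms j))"

definition explores_graph :: "'a set \<Rightarrow> 'a \<Rightarrow> 'a move list \<Rightarrow> bool" where
  "explores_graph V r ms \<longleftrightarrow> V \<subseteq> visited r ms (length ms)"

definition num_agents :: "'a move list \<Rightarrow> nat" where
  "num_agents ms = length (filter (\<lambda>m. m = Invoke) ms)"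

definition total_distance :: "('a set \<Rightarrow> real) \<Rightarrow> 'a \<Rightarrow> 'a move list \<Rightarrow> real" where
  "total_distance w r ms =
     (\<Sum>k<length ms. (case ms ! k of Invoke \<Rightarrow> 0
                       | Traverse i u \<Rightarrow> w {pos_after r ms k ! i, u}))"

definition cost :: "real \<Rightarrow> ('a set \<Rightarrow> real) \<Rightarrow> 'a \<Rightarrow> 'a move list \<Rightarrow> real" where
  "cost q w r ms = q * real (num_agents ms) + total_distance w r ms"

definition cost_optimal ::
  "'a set \<Rightarrow> 'a set set \<Rightarrow> ('a set \<Rightarrow> real) \<Rightarrow> 'a \<Rightarrow> real \<Rightarrow> 'a move list \<Rightarrow> bool" where
  "cost_optimal V E w r q ms \<longleftrightarrow>
     valid_strategy E r ms \<and> explores_graph V r ms \<and>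
     (\<forall>ms'. valid_strategy E r ms' \<and> explores_graph V r ms' \<longrightarrow> cost q w r ms \<le> cost q w r ms')"

text \<open>Agent i explores u: u is first visited (by anyone) through the move that brings
agent i to u (its invocation at the homebase, or an edge traversal).\<close>
definition agent_explores :: "'a \<Rightarrow> 'a move list \<Rightarrow> nat \<Rightarrow> 'a \<Rightarrow> bool" where
  "agent_explores r ms i u \<longleftrightarrow>
     (\<exists>k < length ms. i < length (pos_after r ms (Suc k)) \<and> pos_after r ms (Suc k) ! i = u
        \<and> u \<notin> visited r ms k)"

definition agent_enters :: "'a \<Rightarrow> 'a move list \<Rightarrow> nat \<Rightarrow> 'a set \<Rightarrow> bool" where
  "agent_enters r ms i S \<longleftrightarrow>
     (\<exists>k < length ms. \<exists>u. ms ! k = Traverse i u \<and> u \<in> S \<and> pos_after r ms k ! i \<notin> S)"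

end

theory Submission
  imports Defs
begin


lemma walk_single[simp]: "walk E [a]"
  by (simp add: walk_def)

lemma walk_Cons2: "walk E (a # b # p) \<longleftrightarrow> {a,b} \<in> E \<and> walk E (b # p)"
  unfolding walk_def
  by (auto simp: nth_Cons split: nat.splits)

lemma walk_Nil[simp]: "\<not> walk E []"
  by (simp add: walk_def)

lemma walk_append:
  "walk E xs \<Longrightarrow> walk E ys \<Longrightarrow> {last xs, hd ys} \<in> E \<Longrightarrow> walk E (xs @ ys)"
proof (induction xs rule: induct_list012)
  case 1 then show ?case by (simp add: walk_def)
next
  case (2 x) then show ?case by (cases ys) (auto simp: walk_Cons2)
next
  case (3 x y zs)
  then show ?case by (simp add: walk_Cons2)
qed

lemma walk_glue:
  "walk E xs \<Longrightarrow> walk E ys \<Longrightarrow> last xs = hd ys \<Longrightarrow> walk E (xs @ tl ys)"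
proof (induction xs rule: induct_list012)
  case 1 then show ?case by (simp add: walk_def)
next
  case (2 x) then show ?case by (cases ys) auto
next
  case (3 x y zs)
  then show ?case by (simp add: walk_Cons2)
qed

lemma walk_take: "walk E p \<Longrightarrow> 0 < n \<Longrightarrow> walk E (take n p)"
  unfolding walk_def by (auto simp: nth_take)

lemma walk_drop: "walk E p \<Longrightarrow> n < length p \<Longrightarrow> walk E (drop n p)"
  unfolding walk_def by (auto simp: nth_drop)

lemma walk_rev: "walk E p \<Longrightarrow> walk E (rev p)"
proof (induction p rule: induct_list012)
  case (3 x y zs)
  then have "walk E (rev (y # zs))" "{x,y} \<in> E" by (auto simp: walk_Cons2)
  then have "walk E (rev (y # zs) @ [x])"
    by (intro walk_append) (auto simp: insert_commute)
  then show ?case by simp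
qed auto

lemma walk_distinct:
  "walk E p \<Longrightarrow> \<exists>q. walk E q \<and> distinct q \<and> hd q = hd p \<and> last q = last p \<and> set q \<subseteq> set p"
proof (induction p rule: length_induct)
  case (1 p)
  show ?case
  proof (cases "distinct p")
    case True then show ?thesis using 1 by blast
  next
    case False
    then obtain xs ys zs c where p: "p = xs @ [c] @ ys @ [c] @ zs"
      using not_distinct_decomp by blast
    have w1: "walk E (xs @ [c])"
      using walk_take[OF "1.prems", of "length xs + 1"] p by simp
    have w2: "walk E (c # zs)"
      using walk_drop[OF "1.prems", of "length xs + 1 + length ys"] p by simp
    have w: "walk E (xs @ c # zs)" using walk_glue[OF w1 w2] by simp
    have "length (xs @ c # zs) < length p" using p by simp
    then obtain q where q: "walk E q" "distinct q" "hd q = hd (xs @ c # zs)"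
       "last q = last (xs @ c # zs)" "set q \<subseteq> set (xs @ c # zs)"
      using 1 w by blast
    have "hd (xs @ c # zs) = hd p" using p by (cases xs) auto
    moreover have "last (xs @ c # zs) = last p" using p by (cases zs) auto
    moreover have "set (xs @ c # zs) \<subseteq> set p" using p by auto
    ultimately show ?thesis using q by (intro exI[of _ q]) auto
  qed
qed



lemma sub_V: "subtree V E r v \<subseteq> V"
  by (auto simp: subtree_def)

lemma notin_sub:
  "x \<in> V \<Longrightarrow> x \<notin> subtree V E r v \<Longrightarrow> \<exists>P. walk E P \<and> hd P = r \<and> last P = x \<and> v \<notin> set P"
  by (auto simp: subtree_def)

lemma self_sub: "b \<in> V \<Longrightarrow> b \<in> subtree V E r b"
  by (auto simp: subtree_def walk_def)

lemma r_sub: "r \<in> subtree V E r v \<Longrightarrow> v = r"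
  unfolding subtree_def by (auto dest: spec[of _ "[r]"])

lemma sub_r: "subtree V E r r = V"
  unfolding subtree_def by (auto simp: walk_def hd_in_set)

lemma sub_trans:
  assumes "c \<in> subtree V E r b" shows "subtree V E r c \<subseteq> subtree V E r b"
proof
  fix u assume u: "u \<in> subtree V E r c"
  have "b \<in> set P" if P: "walk E P" "hd P = r" "last P = u" for P
  proof -
    have "c \<in> set P" using u P by (auto simp: subtree_def)
    then obtain j where j: "j < length P" "P ! j = c" by (auto simp: in_set_conv_nth)
    have "walk E (take (Suc j) P)" using walk_take[OF P(1)] by simp
    moreover have "hd (take (Suc j) P) = r" using P j by (cases P) auto
    moreover have "last (take (Suc j) P) = c" using j by (simp add: take_Suc_conv_app_nth)
    moreover have "c \<in> V" using assms by (auto simp: subtree_def)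
    ultimately have "b \<in> set (take (Suc j) P)" using assms by (auto simp: subtree_def)
    then show ?thesis using set_take_subset by fastforce
  qed
  then show "u \<in> subtree V E r b" using u by (auto simp: subtree_def)
qed

lemma entry_v:
  assumes "{x,u} \<in> E" "x \<in> V" "x \<notin> subtree V E r v" "u \<in> subtree V E r v"
  shows "u = v"
proof -
  obtain P where P: "walk E P" "hd P = r" "last P = x" "v \<notin> set P"
    using notin_sub[OF assms(2,3)] by blast
  have "walk E (P @ [u])" using P assms(1) by (intro walk_append) auto
  moreover have "hd (P @ [u]) = r" using P by (cases P) auto
  ultimately have "v \<in> set (P @ [u])" using assms(4) by (auto simp: subtree_def)
  then show ?thesis using P by auto
qed

lemma parent_unique:
  assumes t: "tree V E" and "x \<in> V" "y \<in> V" "x \<notin> subtree V E r v" "y \<notin> subtree V E r v"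
    and "{x,v} \<in> E" "{y,v} \<in> E"
  shows "x = y"
proof (rule ccontr)
  assume ne: "x \<noteq> y"
  obtain P1 where P1: "walk E P1" "hd P1 = r" "last P1 = x" "v \<notin> set P1"
    using notin_sub[OF assms(2,4)] by blast
  obtain P2 where P2: "walk E P2" "hd P2 = r" "last P2 = y" "v \<notin> set P2"
    using notin_sub[OF assms(3,5)] by blast
  have P1ne: "P1 \<noteq> []" "P2 \<noteq> []" using P1 P2 by auto
  have w0: "walk E (rev P1 @ tl P2)"
    using P1 P2 P1ne by (intro walk_glue walk_rev) (auto simp: last_rev)
  have h0: "hd (rev P1 @ tl P2) = x" using P1 P1ne by (simp add: hd_rev)
  have l0: "last (rev P1 @ tl P2) = y"
  proof (cases "tl P2 = []")
    case True
    then have "P2 = [r]" using P2 P1ne by (cases P2) auto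
    then have "y = r" using P2 by simp
    moreover have "last (rev P1) = r" using P1 P1ne by (simp add: last_rev)
    ultimately show ?thesis using True by simp
  next
    case False then show ?thesis using P2 P1ne by (cases P2) auto
  qed
  have s0: "v \<notin> set (rev P1 @ tl P2)" using P1 P2 list.set_sel(2)[of P2] P1ne by auto
  obtain Q where Q: "walk E Q" "distinct Q" "hd Q = x" "last Q = y" "v \<notin> set Q"
    using walk_distinct[OF w0] h0 l0 s0 by blast
  obtain Q' where Q': "Q = x # Q'" using Q by (cases Q) auto
  have "Q' \<noteq> []" using Q Q' ne by auto
  then obtain z Q'' where Q'': "Q' = z # Q''" by (cases Q') auto
  have "walk E (v # Q)" using Q Q' Q'' assms(6) by (simp add: walk_Cons2 insert_commute)
  moreover have "distinct (v # Q)" using Q by simp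
  moreover have "length (v # Q) \<ge> 3" using Q' Q'' by simp
  moreover have "{last (v # Q), hd (v # Q)} \<in> E" using Q Q' assms(7) by simp
  ultimately have "has_cycle E" unfolding has_cycle_def by blast
  then show False using t by (simp add: tree_def)
qed

lemma sub_antisym:
  assumes t: "tree V E" and r: "r \<in> V" and l: "l \<in> V"
    and c: "c \<in> subtree V E r l" "c \<noteq> l"
  shows "l \<notin> subtree V E r c"
proof
  assume lc: "l \<in> subtree V E r c"
  obtain P0 where P0: "walk E P0" "hd P0 = r" "last P0 = l"
    using t r l by (auto simp: tree_def connected_graph_def)
  obtain P where P: "walk E P" "distinct P" "hd P = r" "last P = l"
    using walk_distinct[OF P0(1)] P0 by auto
  have "c \<in> set P" using lc P l by (auto simp: subtree_def)
  then obtain j where j: "j < length P" "P ! j = c" by (auto simp: in_set_conv_nth)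
  have Pne: "P \<noteq> []" using P by auto
  have lastP: "P ! (length P - 1) = l" using P Pne by (simp add: last_conv_nth)
  have jl: "j < length P - 1" using j lastP c(2) by (cases "j = length P - 1") auto
  have "walk E (take (Suc j) P)" using walk_take[OF P(1)] by simp
  moreover have "hd (take (Suc j) P) = r" using P j by (cases P) auto
  moreover have "last (take (Suc j) P) = c" using j by (simp add: take_Suc_conv_app_nth)
  moreover have "c \<in> V" using c by (auto simp: subtree_def)
  ultimately have "l \<in> set (take (Suc j) P)" using c by (auto simp: subtree_def)
  then obtain m where m: "m < length (take (Suc j) P)" "take (Suc j) P ! m = l"
    by (auto simp: in_set_conv_nth)
  then have "m \<le> j" "P ! m = l" by auto
  then have "m = length P - 1" using Pne P(2) lastP j jl nth_eq_iff_index_eq[of P m "length P - 1"] by auto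
  then show False using \<open>m \<le> j\<close> jl by simp
qed

lemma leaf_exists:
  assumes t: "tree V E" and r: "r \<in> V" and x: "x \<in> subtree V E r v" and vr: "v \<noteq> r"
  shows "\<exists>l. is_leaf V E r l \<and> l \<in> subtree V E r x"
proof -
  have fin: "finite V" using t by (simp add: tree_def graph_def)
  have xV: "x \<in> V" using x by (auto simp: subtree_def)
  obtain l where l: "l \<in> subtree V E r x"
    and min: "\<forall>y. y \<in> subtree V E r x \<longrightarrow> card (subtree V E r l) \<le> card (subtree V E r y)"
    using ex_has_least_nat[of "\<lambda>y. y \<in> subtree V E r x" x "\<lambda>y. card (subtree V E r y)"]
      self_sub[OF xV] by blast
  have lV: "l \<in> V" using l by (auto simp: subtree_def)
  have lv: "l \<in> subtree V E r v" using sub_trans[OF x] l by blast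
  have "l \<noteq> r" using lv vr r_sub by metis
  moreover have "children V E r l = {}"
  proof (rule ccontr)
    assume "children V E r l \<noteq> {}"
    then obtain c where c: "c \<in> subtree V E r l" "c \<noteq> l" by (auto simp: children_def)
    have cx: "c \<in> subtree V E r x" using sub_trans[OF l] c by blast
    have sub: "subtree V E r c \<subseteq> subtree V E r l" using sub_trans[OF c(1)] .
    have "l \<notin> subtree V E r c" using sub_antisym[OF t r lV c] .
    with sub self_sub[OF lV] have "subtree V E r c \<subset> subtree V E r l" by blast
    then have "card (subtree V E r c) < card (subtree V E r l)"
      using fin sub_V by (metis psubset_card_mono rev_finite_subset)
    then show False using min cx by force
  qed
  ultimately show ?thesis using lV l by (auto simp: is_leaf_def)
qed



definition pa :: "'a \<Rightarrow> 'a list \<Rightarrow> 'a move list \<Rightarrow> nat \<Rightarrow> 'a list" where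
  "pa r pos ms k = foldl (step r) pos (take k ms)"

definition mcost :: "('a set \<Rightarrow> real) \<Rightarrow> 'a list \<Rightarrow> 'a move \<Rightarrow> real" where
  "mcost w pos m = (case m of Invoke \<Rightarrow> 0 | Traverse i u \<Rightarrow> w {pos ! i, u})"

fun validR :: "'a set set \<Rightarrow> 'a \<Rightarrow> 'a list \<Rightarrow> 'a move list \<Rightarrow> bool" where
  "validR E r pos [] = True"
| "validR E r pos (m # ms) = (valid_move E pos m \<and> validR E r (step r pos m) ms)"

fun distR :: "('a set \<Rightarrow> real) \<Rightarrow> 'a \<Rightarrow> 'a list \<Rightarrow> 'a move list \<Rightarrow> real" where
  "distR w r pos [] = 0"
| "distR w r pos (m # ms) = mcost w pos m + distR w r (step r pos m) ms"

fun statesR :: "'a \<Rightarrow> 'a list \<Rightarrow> 'a move list \<Rightarrow> 'a list set" where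
  "statesR r pos [] = {pos}"
| "statesR r pos (m # ms) = insert pos (statesR r (step r pos m) ms)"

lemma pa_0[simp]: "pa r pos ms 0 = pos" by (simp add: pa_def)
lemma pa_Cons_Suc[simp]: "pa r pos (m # ms) (Suc k) = pa r (step r pos m) ms k" by (simp add: pa_def)
lemma pa_Suc: "k < length ms \<Longrightarrow> pa r pos ms (Suc k) = step r (pa r pos ms k) (ms ! k)"
  by (simp add: pa_def take_Suc_conv_app_nth)

lemma validR_eq: "validR E r pos ms \<longleftrightarrow> (\<forall>k<length ms. valid_move E (pa r pos ms k) (ms ! k))"
  by (induction ms arbitrary: pos) (auto simp: All_less_Suc2)

lemma distR_eq: "distR w r pos ms = (\<Sum>k<length ms. mcost w (pa r pos ms k) (ms ! k))"
  by (induction ms arbitrary: pos) (auto simp del: sum.lessThan_Suc simp add: sum.lessThan_Suc_shift)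

lemma statesR_eq: "statesR r pos ms = (\<lambda>k. pa r pos ms k) ` {..length ms}"
  by (induction ms arbitrary: pos) (auto simp: atMost_Suc_eq_insert_0 image_image)

lemma valid_strategy_R: "valid_strategy E r ms \<longleftrightarrow> validR E r [] ms"
  by (simp add: valid_strategy_def validR_eq pa_def pos_after_def)

lemma total_distance_R: "total_distance w r ms = distR w r [] ms"
  unfolding total_distance_def distR_eq mcost_def pa_def pos_after_def by simp

lemma visited_R: "visited r ms (length ms) = \<Union> (set ` statesR r [] ms)"
  by (simp add: visited_def statesR_eq pa_def pos_after_def image_image)

lemma pos_after_pa: "pos_after r ms k = pa r [] ms k" by (simp add: pa_def pos_after_def)

section \<open>Surgery\<close>

definition fv :: "'a set \<Rightarrow> 'a \<Rightarrow> 'a \<Rightarrow> 'a" where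
  "fv T p x = (if x \<in> T then p else x)"

definition gv :: "nat \<Rightarrow> 'a set \<Rightarrow> 'a \<Rightarrow> 'a list \<Rightarrow> 'a list" where
  "gv i T p pos = pos[i := fv T p (pos ! i)]"

definition delm :: "nat \<Rightarrow> 'a set \<Rightarrow> 'a list \<Rightarrow> 'a move \<Rightarrow> bool" where
  "delm i T pos m = (case m of Invoke \<Rightarrow> False | Traverse j u \<Rightarrow> j = i \<and> (u \<in> T \<or> pos ! j \<in> T))"

fun tr :: "'a \<Rightarrow> nat \<Rightarrow> 'a set \<Rightarrow> 'a list \<Rightarrow> 'a move list \<Rightarrow> 'a move list" where
  "tr r i T pos [] = []"
| "tr r i T pos (m # ms) = (if delm i T pos m then tr r i T (step r pos m) ms
                            else m # tr r i T (step r pos m) ms)"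

fun hasdel :: "'a \<Rightarrow> nat \<Rightarrow> 'a set \<Rightarrow> 'a list \<Rightarrow> 'a move list \<Rightarrow> bool" where
  "hasdel r i T pos [] = False"
| "hasdel r i T pos (m # ms) = (delm i T pos m \<or> hasdel r i T (step r pos m) ms)"

lemma gv_nil[simp]: "gv i T p [] = []" by (simp add: gv_def)

lemma gv_nth: "j < length pos \<Longrightarrow> gv i T p pos ! j = (if j = i then fv T p (pos ! j) else pos ! j)"
  by (simp add: gv_def)

lemma gv_length[simp]: "length (gv i T p pos) = length pos" by (simp add: gv_def)

locale surg =
  fixes V :: "'a set" and E :: "'a set set" and r :: 'a and i :: nat and T :: "'a set" and p :: 'a
  assumes gr: "graph V E" and rV: "r \<in> V" and rT: "r \<notin> T"
    and H: "\<And>x u. {x,u} \<in> E \<Longrightarrow> x \<in> V \<Longrightarrow> x \<notin> T \<Longrightarrow> u \<in> T \<Longrightarrow> x = p"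
begin

lemma edgeV: "{x,u} \<in> E \<Longrightarrow> x \<in> V \<and> u \<in> V"
  using gr unfolding graph_def by (auto simp: doubleton_eq_iff)

lemma step_V: "valid_move E pos m \<Longrightarrow> set pos \<subseteq> V \<Longrightarrow> set (step r pos m) \<subseteq> V"
  by (cases m) (auto simp: rV dest!: edgeV set_update_subset_insert[THEN subsetD])

lemma del_step:
  assumes "valid_move E pos m" "set pos \<subseteq> V" "delm i T pos m"
  shows "gv i T p (step r pos m) = gv i T p pos"
proof (cases m)
  case Invoke then show ?thesis using assms by (simp add: delm_def)
next
  case (Traverse j u)
  then have j: "j = i" "i < length pos" "{pos ! i, u} \<in> E" and d: "u \<in> T \<or> pos ! i \<in> T"
    using assms by (auto simp: delm_def)
  have xV: "pos ! i \<in> V" using j assms(2) by auto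
  have uV: "u \<in> V" using edgeV[OF j(3)] by simp
  have "fv T p u = fv T p (pos ! i)"
  proof -
    { assume "u \<in> T" "pos ! i \<notin> T" then have "pos ! i = p" using H[OF j(3) xV] by blast }
    moreover
    { assume "u \<notin> T" "pos ! i \<in> T" then have "u = p" using H[of u "pos ! i"] j(3) uV
        by (simp add: insert_commute) }
    ultimately show ?thesis using d by (auto simp: fv_def)
  qed
  then show ?thesis using Traverse j by (simp add: gv_def)
qed

lemma keep_step:
  assumes "valid_move E pos m" "\<not> delm i T pos m"
  shows "step r (gv i T p pos) m = gv i T p (step r pos m)"
    "valid_move E (gv i T p pos) m" "mcost w (gv i T p pos) m = mcost w pos m"
proof -
  have "step r (gv i T p pos) m = gv i T p (step r pos m) \<and>
    valid_move E (gv i T p pos) m \<and> mcost w (gv i T p pos) m = mcost w pos m"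
  proof (cases m)
    case Invoke
    have "gv i T p (pos @ [r]) = gv i T p pos @ [r]"
    proof -
      consider "i < length pos" | "i = length pos" | "i > length pos" by linarith
      then show ?thesis
      proof cases
        case 3 then show ?thesis by (simp add: gv_def list_update_beyond)
      qed (use rT in \<open>auto simp: gv_def nth_append list_update_append fv_def list_update_beyond\<close>)
    qed
    then show ?thesis using Invoke by (simp add: mcost_def)
  next
    case (Traverse j u)
    then have j: "j < length pos" "{pos ! j, u} \<in> E" and nd: "j = i \<longrightarrow> u \<notin> T \<and> pos ! j \<notin> T"
      using assms by (auto simp: delm_def)
    show ?thesis
    proof (cases "j = i")
      case True then show ?thesis using Traverse j nd
        by (simp add: gv_def fv_def mcost_def)
    next
      case False then show ?thesis using Traverse j
        by (simp add: gv_def mcost_def list_update_swap)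
    qed
  qed
  then show "step r (gv i T p pos) m = gv i T p (step r pos m)"
    "valid_move E (gv i T p pos) m" "mcost w (gv i T p pos) m = mcost w pos m" by auto
qed

lemma tr_valid: "validR E r pos ms \<Longrightarrow> set pos \<subseteq> V \<Longrightarrow> validR E r (gv i T p pos) (tr r i T pos ms)"
proof (induction ms arbitrary: pos)
  case (Cons m ms)
  then have v: "valid_move E pos m" and vs: "validR E r (step r pos m) ms"
    and s: "set (step r pos m) \<subseteq> V" using step_V by auto
  show ?case
  proof (cases "delm i T pos m")
    case True then show ?thesis using Cons.IH[OF vs s] del_step[OF v Cons.prems(2)] by simp
  next
    case False then show ?thesis using Cons.IH[OF vs s] keep_step[OF v False] by simp
  qed
qed simp

lemma tr_states: "validR E r pos ms \<Longrightarrow> set pos \<subseteq> V \<Longrightarrow>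
    statesR r (gv i T p pos) (tr r i T pos ms) = gv i T p ` statesR r pos ms"
proof (induction ms arbitrary: pos)
  case (Cons m ms)
  then have v: "valid_move E pos m" and vs: "validR E r (step r pos m) ms"
    and s: "set (step r pos m) \<subseteq> V" using step_V by auto
  show ?case
  proof (cases "delm i T pos m")
    case True
    have "gv i T p ` statesR r pos (m # ms) = insert (gv i T p pos) (gv i T p ` statesR r (step r pos m) ms)"
      by simp
    moreover have "gv i T p (step r pos m) \<in> statesR r (gv i T p (step r pos m)) (tr r i T (step r pos m) ms)"
      by (metis Cons.IH image_eqI s vs statesR_eq atMost_iff le0 pa_0)
    ultimately show ?thesis using True Cons.IH[OF vs s] del_step[OF v Cons.prems(2)]
      by (simp add: insert_absorb)
  next
    case False then show ?thesis using Cons.IH[OF vs s] keep_step[OF v False] by simp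
  qed
qed simp

lemma tr_dist: "validR E r pos ms \<Longrightarrow> set pos \<subseteq> V \<Longrightarrow> \<forall>e\<in>E. w e > 0 \<Longrightarrow>
    distR w r (gv i T p pos) (tr r i T pos ms) \<le> distR w r pos ms \<and>
    (hasdel r i T pos ms \<longrightarrow> distR w r (gv i T p pos) (tr r i T pos ms) < distR w r pos ms)"
proof (induction ms arbitrary: pos)
  case (Cons m ms)
  then have v: "valid_move E pos m" and vs: "validR E r (step r pos m) ms"
    and s: "set (step r pos m) \<subseteq> V" using step_V by auto
  note IH = Cons.IH[OF vs s Cons.prems(3)]
  show ?case
  proof (cases "delm i T pos m")
    case True
    then obtain u where m: "m = Traverse i u" by (cases m) (auto simp: delm_def)
    then have "mcost w pos m > 0" using v Cons.prems(3) by (auto simp: mcost_def)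
    then show ?thesis using True IH del_step[OF v Cons.prems(2) True] by simp
  next
    case False then show ?thesis using IH keep_step(1)[OF v False] keep_step(3)[OF v False, of w] by simp
  qed
qed simp

end

lemma tr_agents: "num_agents (tr r i T pos ms) = num_agents ms"
  by (induction ms arbitrary: pos) (auto simp: num_agents_def delm_def split: move.splits)

lemma hasdel_at: "k < length ms \<Longrightarrow> delm i T (pa r pos ms k) (ms ! k) \<Longrightarrow> hasdel r i T pos ms"
  by (induction ms arbitrary: pos k) (auto simp: less_Suc_eq_0_disj nth_Cons split: nat.splits)



lemma traj:
  assumes vs: "valid_strategy E r ms"
  shows "t \<le> length ms \<Longrightarrow> j < length (pa r [] ms t) \<Longrightarrow>
    \<exists>P. walk E P \<and> hd P = r \<and> last P = pa r [] ms t ! j \<and>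
      (\<forall>y\<in>set P. \<exists>t'\<le>t. j < length (pa r [] ms t') \<and> pa r [] ms t' ! j = y)"
proof (induction t arbitrary: j)
  case 0 then show ?case by simp
next
  case (Suc t)
  have tl: "t < length ms" using Suc by simp
  have vm: "valid_move E (pa r [] ms t) (ms ! t)"
    using vs tl by (simp add: valid_strategy_def pos_after_pa)
  have eq: "pa r [] ms (Suc t) = step r (pa r [] ms t) (ms ! t)" using pa_Suc[OF tl] .
  show ?case
  proof (cases "ms ! t")
    case Invoke
    show ?thesis
    proof (cases "j < length (pa r [] ms t)")
      case True
      then obtain P where P: "walk E P" "hd P = r" "last P = pa r [] ms t ! j"
        "\<forall>y\<in>set P. \<exists>t'\<le>t. j < length (pa r [] ms t') \<and> pa r [] ms t' ! j = y"
        using Suc.IH[of j] tl by auto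
      then show ?thesis using True eq Invoke
        by (intro exI[of _ P]) (auto simp: nth_append le_Suc_eq)
    next
      case False
      then have "j = length (pa r [] ms t)" using Suc.prems eq Invoke by simp
      then show ?thesis using eq Invoke
        by (intro exI[of _ "[r]"]) (auto intro!: exI[of _ "Suc t"] simp: nth_append)
    qed
  next
    case (Traverse a u)
    have jl: "j < length (pa r [] ms t)" using Suc.prems eq Traverse by simp
    obtain P where P: "walk E P" "hd P = r" "last P = pa r [] ms t ! j"
      "\<forall>y\<in>set P. \<exists>t'\<le>t. j < length (pa r [] ms t') \<and> pa r [] ms t' ! j = y"
      using Suc.IH[OF _ jl] tl by auto
    show ?thesis
    proof (cases "j = a")
      case False
      then show ?thesis using P eq Traverse jl
        by (intro exI[of _ P]) (auto simp: le_Suc_eq)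
    next
      case True
      have e: "{pa r [] ms t ! j, u} \<in> E" using vm Traverse True by simp
      have "walk E (P @ [u])" using P e by (intro walk_append) auto
      moreover have "hd (P @ [u]) = r" using P by (cases P) auto
      moreover have "\<forall>y\<in>set (P @ [u]). \<exists>t'\<le>Suc t. j < length (pa r [] ms t') \<and> pa r [] ms t' ! j = y"
      proof
        fix y assume "y \<in> set (P @ [u])"
        then consider "y \<in> set P" | "y = u" by auto
        then show "\<exists>t'\<le>Suc t. j < length (pa r [] ms t') \<and> pa r [] ms t' ! j = y"
        proof cases
          case 1 then show ?thesis using P(4) le_Suc_eq by blast
        next
          case 2 then show ?thesis using eq Traverse jl True by (intro exI[of _ "Suc t"]) simp
        qed
      qed
      ultimately show ?thesis using P eq Traverse jl True
        by (intro exI[of _ "P @ [u]"]) auto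
    qed
  qed
qed

lemma posV:
  assumes vs: "valid_strategy E r ms" and gr: "graph V E" and rV: "r \<in> V"
  shows "t \<le> length ms \<Longrightarrow> set (pa r [] ms t) \<subseteq> V"
proof (induction t)
  case (Suc t)
  have tl: "t < length ms" using Suc by simp
  have vm: "valid_move E (pa r [] ms t) (ms ! t)"
    using vs tl by (simp add: valid_strategy_def pos_after_pa)
  have eq: "pa r [] ms (Suc t) = step r (pa r [] ms t) (ms ! t)" using pa_Suc[OF tl] .
  have IH: "set (pa r [] ms t) \<subseteq> V" using Suc tl by simp
  show ?case
  proof (cases "ms ! t")
    case Invoke then show ?thesis using eq IH rV by simp
  next
    case (Traverse a u)
    then have "{pa r [] ms t ! a, u} \<in> E" using vm by simp
    then have "u \<in> V" using gr unfolding graph_def by (auto simp: doubleton_eq_iff)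
    then show ?thesis using eq IH Traverse set_update_subset_insert by fastforce
  qed
qed simp



theorem mainTheorem4:
  fixes V :: "'a set" and E :: "'a set set" and w :: "'a set \<Rightarrow> real"
    and r :: 'a and q :: real and ms :: "'a move list" and i :: nat and v :: 'a
  assumes "tree V E"
    and "\<forall>e\<in>E. w e > 0"
    and "r \<in> V"
    and "q \<ge> 0"
    and "cost_optimal V E w r q ms"
    and "v \<in> V"
    and "agent_enters r ms i (subtree V E r v)"
  shows "\<exists>u. is_leaf V E r u \<and> u \<in> subtree V E r v \<and> agent_explores r ms i u"
proof (rule ccontr)
  assume nc: "\<not> ?thesis"
  note t = assms(1) and wpos = assms(2) and rV = assms(3)
  define T where "T = subtree V E r v"
  have gr: "graph V E" using t by (simp add: tree_def)
  have vs: "valid_strategy E r ms" and ex: "explores_graph V r ms"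
    and opt: "\<And>ms'. valid_strategy E r ms' \<Longrightarrow> explores_graph V r ms' \<Longrightarrow> cost q w r ms \<le> cost q w r ms'"
    using assms(5) by (auto simp: cost_optimal_def)
  obtain k0 u0 where k0: "k0 < length ms" "ms ! k0 = Traverse i u0" "u0 \<in> T" "pa r [] ms k0 ! i \<notin> T"
    using assms(7) by (auto simp: agent_enters_def T_def pos_after_pa)
  define x0 where "x0 = pa r [] ms k0 ! i"
  have vm0: "i < length (pa r [] ms k0)" "{x0, u0} \<in> E"
    using vs k0 by (auto simp: valid_strategy_def pos_after_pa x0_def)
  have x0V: "x0 \<in> V" using posV[OF vs gr rV, of k0] k0 vm0 by (auto simp: x0_def)
  have x0T: "x0 \<notin> T" using k0 by (simp add: x0_def)
  have u0v: "u0 = v" using entry_v[OF vm0(2) x0V] x0T k0(3) by (simp add: T_def)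
  have vr: "v \<noteq> r" using x0V x0T sub_r[of V E r] by (auto simp: T_def)
  have rT: "r \<notin> T" using r_sub vr by (metis T_def)
  define p where "p = (SOME x. x \<in> V \<and> x \<notin> T \<and> {x, v} \<in> E)"
  have ps: "p \<in> V \<and> p \<notin> T \<and> {p, v} \<in> E"
    unfolding p_def by (rule someI[of _ x0]) (use x0V x0T vm0 u0v in auto)
  have H: "x = p" if "{x,u} \<in> E" "x \<in> V" "x \<notin> T" "u \<in> T" for x u
  proof -
    have "u = v" using entry_v[OF that(1,2)] that(3,4) by (simp add: T_def)
    then show ?thesis using parent_unique[OF t that(2), of p r v] ps that by (simp add: T_def)
  qed
  interpret surg V E r i T p
    by unfold_locales (use gr rV rT H in auto)
  define ms' where "ms' = tr r i T [] ms"
  have vR: "validR E r [] ms" using vs unfolding valid_strategy_R .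
  have vs0: "validR E r (gv i T p []) (tr r i T [] ms)" by (rule tr_valid[OF vR]) simp
  have vs': "valid_strategy E r ms'"
    using vs0 unfolding ms'_def valid_strategy_R gv_nil .
  have st0: "statesR r (gv i T p []) (tr r i T [] ms) = gv i T p ` statesR r [] ms"
    by (rule tr_states[OF vR]) simp
  have st': "statesR r [] ms' = gv i T p ` statesR r [] ms"
    using st0 unfolding ms'_def gv_nil .
  have C: "x \<in> \<Union> (set ` statesR r [] ms')"
    if "t \<le> length ms" "j < length (pa r [] ms t)" "pa r [] ms t ! j = x" "j \<noteq> i \<or> x \<notin> T" for x t j
  proof -
    let ?s = "pa r [] ms t"
    have "?s \<in> statesR r [] ms" using that(1) by (simp add: statesR_eq)
    then have "gv i T p ?s \<in> statesR r [] ms'" using st' by simp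
    moreover have "gv i T p ?s ! j = x" using that by (auto simp: gv_nth fv_def)
    ultimately show ?thesis using that(2) by (metis UN_iff gv_length image_eqI nth_mem)
  qed
  have exV: "x \<in> visited r ms (length ms) \<Longrightarrow> \<exists>t\<le>length ms. \<exists>j<length (pa r [] ms t). pa r [] ms t ! j = x" for x
    by (auto simp: visited_def pos_after_pa in_set_conv_nth)
  have ex': "explores_graph V r ms'"
    unfolding explores_graph_def visited_R
  proof
    fix x assume xV: "x \<in> V"
    show "x \<in> \<Union> (set ` statesR r [] ms')"
    proof (cases "x \<in> T")
      case False
      have "x \<in> visited r ms (length ms)" using ex xV by (auto simp: explores_graph_def)
      from exV[OF this] obtain t j where tj: "t \<le> length ms" "j < length (pa r [] ms t)" "pa r [] ms t ! j = x"
        by blast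
      show ?thesis using C[OF tj] False by blast
    next
      case True
      obtain l where l: "is_leaf V E r l" "l \<in> subtree V E r x"
        using leaf_exists[OF t rV True[unfolded T_def] vr] by blast
      have lT: "l \<in> T" using sub_trans[OF True[unfolded T_def]] l(2) unfolding T_def by blast
      have lV: "l \<in> V" using l by (simp add: is_leaf_def)
      have Q: "l \<in> visited r ms (length ms)" using ex lV by (auto simp: explores_graph_def)
      have Q0: "l \<notin> visited r ms 0" by (simp add: visited_def pos_after_def)
      obtain t0 where t0: "t0 \<le> length ms" "\<forall>t<t0. l \<notin> visited r ms t" "l \<in> visited r ms t0"
        using ex_least_nat_le[of "\<lambda>t. l \<in> visited r ms t", OF Q] by blast
      obtain k where k: "t0 = Suc k" using t0 Q0 by (cases t0) auto
      have nk: "l \<notin> visited r ms k" using t0 k by simp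
      have "l \<in> set (pa r [] ms (Suc k))"
      proof -
        obtain j where j: "j \<le> Suc k" "l \<in> set (pos_after r ms j)" using t0 k by (auto simp: visited_def)
        have "j \<le> k \<Longrightarrow> False" using nk j by (auto simp: visited_def)
        then have "j = Suc k" using j(1) le_Suc_eq by blast
        then show ?thesis using j(2) by (simp add: pos_after_pa)
      qed
      then obtain a where a: "a < length (pa r [] ms (Suc k))" "pa r [] ms (Suc k) ! a = l"
        by (auto simp: in_set_conv_nth)
      have kl: "k < length ms" using t0 k by simp
      have "agent_explores r ms a l"
        unfolding agent_explores_def using kl a nk by (auto simp: pos_after_pa)
      then have ai: "a \<noteq> i" using nc l lT by (auto simp: T_def)
      obtain P where P: "walk E P" "hd P = r" "last P = l"
        "\<forall>y\<in>set P. \<exists>t'\<le>Suc k. a < length (pa r [] ms t') \<and> pa r [] ms t' ! a = y"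
        using traj[OF vs _ a(1)] kl a(2) by auto
      have "x \<in> set P" using l(2) P by (auto simp: subtree_def)
      then obtain t' where "t' \<le> Suc k" "a < length (pa r [] ms t')" "pa r [] ms t' ! a = x"
        using P(4) by blast
      then show ?thesis using ai kl by (intro C) auto
    qed
  qed
  have "hasdel r i T [] ms" using hasdel_at[OF k0(1)] k0 by (simp add: delm_def)
  then have "distR w r [] ms' < distR w r [] ms"
    using tr_dist[OF vR _ wpos] by (simp add: ms'_def)
  then have "cost q w r ms' < cost q w r ms"
    by (simp add: cost_def total_distance_R ms'_def tr_agents)
  with opt[OF vs' ex'] show False by simp
qed

end
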